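(* Let $\psi_{0,0,0}(x_1,x_2,x_3)=(1-x_1)(1-x_2)(1-x_3)$ on $[0,1]^3$. For any prescribed real numbers $\tilde I_0,\tilde I_1,\tilde I_2,\tilde I_3,\tilde J_0,\tilde J_1,\tilde J_2$ there exists a function $\tilde\psi_{0,0,0}$ on $[0,1]^3$ that is continuous, piecewise $C^1$ and symmetric under permutation of the coordinate axes, such that $I_a=\tilde I_a$ for $a=0,1,2,3$ and $J_b=\tilde J_b$ for $b=0,1,2$, where $I_a,J_b$ are the quantities associated with $\tilde\psi_{0,0,0}$ as defined in the context.
   Context: Given $\tilde\psi_{0,0,0}$ on $[0,1]^3$, for $s=(s_1,s_2,s_3)\in\{0,1\}^3$ let $\tilde\psi_{s_1,s_2,s_3}(x)=\tilde\psi_{0,0,0}(|x_1-s_1|,|x_2-s_2|,|x_3-s_3|)$ (the test shape function attached to the corner $s$ of the unit cube). Define $I_{s_1,s_2,s_3}=\int_{[0,1]^3}\psi_{0,0,0}\,\tilde\psi_{s_1,s_2,s_3}\,dx$ and $J^{(1)}_{s_1,s_2,s_3}=\int_{[0,1]^3}\frac{\partial\psi_{0,0,0}}{\partial x_1}\frac{\partial\tilde\psi_{s_1,s_2,s_3}}{\partial x_1}\,dx$. Set $I_0=I_{0,0,0}$, $I_1=I_{1,0,0}$, $I_2=I_{1,1,0}$, $I_3=I_{1,1,1}$, and $J_0=J^{(1)}_{0,0,0}$, $J_1=J^{(1)}_{0,1,0}$, $J_2=J^{(1)}_{0,1,1}$. *)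

theory Defs
  imports "HOL-Analysis.Analysis"
begin

definition unit_cube :: "(real^3) set" where
  "unit_cube = cbox 0 1"

definition psi000 :: "real^3 \<Rightarrow> real" where
  "psi000 x = (1 - x$1) * (1 - x$2) * (1 - x$3)"

definition corner_shape :: "(real^3 \<Rightarrow> real) \<Rightarrow> real^3 \<Rightarrow> real^3 \<Rightarrow> real" where
  "corner_shape f s x = f (\<chi> i. \<bar>x$i - s$i\<bar>)"

definition pd1 :: "(real^3 \<Rightarrow> real) \<Rightarrow> real^3 \<Rightarrow> real" where
  "pd1 f x = deriv (\<lambda>t. f (x + t *\<^sub>R axis 1 1)) 0"

definition C1_on :: "(real^3) set \<Rightarrow> (real^3 \<Rightarrow> real) \<Rightarrow> bool" where
  "C1_on U g \<longleftrightarrow> (\<exists>g'. (\<forall>x\<in>U. (g has_derivative blinfun_apply (g' x)) (at x))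
                          \<and> continuous_on U g')"

definition piecewise_C1_cube :: "(real^3 \<Rightarrow> real) \<Rightarrow> bool" where
  "piecewise_C1_cube f \<longleftrightarrow>
     (\<exists>\<P>. finite \<P> \<and> \<Union>\<P> = unit_cube \<and> (\<forall>P\<in>\<P>. polytope P) \<and>
        (\<forall>P\<in>\<P>. \<exists>U g. open U \<and> P \<subseteq> U \<and> C1_on U g \<and> (\<forall>x\<in>P. f x = g x)))"

definition axis_symmetric :: "(real^3 \<Rightarrow> real) \<Rightarrow> bool" where
  "axis_symmetric f \<longleftrightarrow>
     (\<forall>p. p permutes (UNIV :: 3 set) \<longrightarrow> (\<forall>x\<in>unit_cube. f (\<chi> i. x $ p i) = f x))"

definition I_int :: "(real^3 \<Rightarrow> real) \<Rightarrow> real^3 \<Rightarrow> real \<Rightarrow> bool" where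
  "I_int pt s v \<longleftrightarrow> ((\<lambda>x. psi000 x * corner_shape pt s x) has_integral v) unit_cube"

definition J_int :: "(real^3 \<Rightarrow> real) \<Rightarrow> real^3 \<Rightarrow> real \<Rightarrow> bool" where
  "J_int pt s v \<longleftrightarrow> ((\<lambda>x. pd1 psi000 x * pd1 (corner_shape pt s) x) has_integral v) unit_cube"

end

theory Submission imports Defs begin

lemma prodint:
  fixes g :: "'a::euclidean_space \<Rightarrow> real \<Rightarrow> real"
  assumes cont: "\<And>b. b\<in>Basis \<Longrightarrow> continuous_on {0..1} (g b)"
  shows "((\<lambda>x. \<Prod>b\<in>Basis. g b (x\<bullet>b)) has_integral (\<Prod>b\<in>Basis. integral {0..1} (g b))) (cbox 0 One)"
proof -
  define G where "G b t = indicator {0..1::real} t * g b t" for b t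
  have si: "set_integrable lborel {0..1} (g b)" if "b\<in>Basis" for b
    using borel_integrable_atLeastAtMost'[OF cont[OF that]] .
  have iG: "integrable lborel (G b)" if "b\<in>Basis" for b
    using si[OF that] unfolding set_integrable_def G_def by simp
  have vG: "integral\<^sup>L lborel (G b) = integral {0..1} (g b)" if "b\<in>Basis" for b
    using set_borel_integral_eq_integral(2)[OF si[OF that]] unfolding set_lebesgue_integral_def G_def by simp
  interpret PS: product_sigma_finite "\<lambda>b::'a. lborel :: real measure" by standard
  define T where "T = (\<lambda>f::'a\<Rightarrow>real. \<Sum>b\<in>Basis. f b *\<^sub>R b)"
  define F where "F x = (\<Prod>b\<in>Basis. G b (x\<bullet>b))" for x :: 'a
  have Tm: "T \<in> measurable (\<Pi>\<^sub>M b\<in>Basis. lborel) borel" unfolding T_def by measurable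
  have Gm: "G b \<in> borel_measurable lborel" if "b\<in>Basis" for b using iG[OF that] by auto
  have Fm: "F \<in> borel_measurable borel"
    unfolding F_def
    apply (rule borel_measurable_prod)
    apply (rule measurable_compose[of "\<lambda>x. x\<bullet>_" _ lborel]) 
    using Gm by auto
  have FT: "F (T f) = (\<Prod>b\<in>Basis. G b (f b))" for f
    unfolding F_def T_def by (simp add: inner_sum_left inner_Basis if_distrib cong: if_cong)
  have "integrable (\<Pi>\<^sub>M b\<in>Basis. lborel) (\<lambda>f. \<Prod>b\<in>Basis. G b (f b))"
    by (rule PS.product_integrable_prod) (auto intro: iG)
  then have intF: "integrable lborel F"
    unfolding lborel_eq[where 'a='a] T_def[symmetric]
    by (subst integrable_distr_eq[OF Tm Fm]) (simp add: FT)
  have "integral\<^sup>L lborel F = (\<Prod>b\<in>Basis. integral {0..1} (g b))"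
    unfolding lborel_eq[where 'a='a] T_def[symmetric]
    apply (subst integral_distr[OF Tm Fm])
    apply (simp add: FT)
    apply (subst PS.product_integral_prod)
    using iG vG by auto
  with has_integral_integral_lborel[OF intF]
  have Fi: "(F has_integral (\<Prod>b\<in>Basis. integral {0..1} (g b))) UNIV" by simp
  have Feq: "F x = (if x \<in> cbox 0 One then (\<Prod>b\<in>Basis. g b (x\<bullet>b)) else 0)" for x
  proof (cases "x \<in> cbox 0 One")
    case True then show ?thesis unfolding F_def G_def by (auto simp: mem_box intro!: prod.cong)
  next
    case False
    then obtain b where "b\<in>Basis" "x\<bullet>b \<notin> {0..1}" by (auto simp: mem_box)
    then have "G b (x\<bullet>b) = 0" unfolding G_def by simp
    then have "F x = 0" unfolding F_def using \<open>b\<in>Basis\<close> by (intro prod_zero finite_Basis bexI[of _ b])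
    then show ?thesis using False by simp
  qed
  have Fe: "F = (\<lambda>x. if x \<in> cbox 0 One then (\<Prod>b\<in>Basis. g b (x\<bullet>b)) else 0)"
    by (rule ext) (rule Feq)
  show ?thesis using Fi unfolding Fe has_integral_restrict_UNIV .
qed

lemma Basis3: "(Basis::(real^3) set) = {axis 1 1, axis 2 1, axis 3 1}"
  unfolding Basis_vec_def UNIV_3 by auto

lemma axd: "axis (1::3) (1::real) \<noteq> axis 2 1" "axis (1::3) (1::real) \<noteq> axis 3 1" "axis (2::3) (1::real) \<noteq> axis 3 1"
  "axis (2::3) (1::real) \<noteq> axis 1 1" "axis (3::3) (1::real) \<noteq> axis 1 1" "axis (3::3) (1::real) \<noteq> axis 2 1"
  by (simp_all add: axis_eq_axis)

lemma One3: "(One::real^3) = 1"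
  by (simp add: vec_eq_iff Basis3 axd forall_3 axis_def)

lemma prod3:
  fixes f1 f2 f3 :: "real \<Rightarrow> real"
  assumes "continuous_on {0..1} f1" "continuous_on {0..1} f2" "continuous_on {0..1} f3"
    "(f1 has_integral c1) {0..1}" "(f2 has_integral c2) {0..1}" "(f3 has_integral c3) {0..1}"
  shows "((\<lambda>x::real^3. f1 (x$1) * f2 (x$2) * f3 (x$3)) has_integral (c1*c2*c3)) (cbox 0 1)"
proof -
  define g where "g b = (if b = axis 1 1 then f1 else if b = axis 2 1 then f2 else f3)" for b :: "real^3"
  have "((\<lambda>x. \<Prod>b\<in>Basis. g b (x\<bullet>b)) has_integral (\<Prod>b\<in>Basis. integral {0..1} (g b))) (cbox 0 One)"
    by (rule prodint) (use assms in \<open>auto simp: g_def Basis3\<close>)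
  moreover have "(\<lambda>x::real^3. \<Prod>b\<in>Basis. g b (x\<bullet>b)) = (\<lambda>x. f1 (x$1) * f2 (x$2) * f3 (x$3))"
    by (rule ext) (simp add: Basis3 axd g_def inner_axis mult.assoc)
  moreover have "(\<Prod>b\<in>Basis. integral {0..1} (g b)) = c1*c2*c3"
    using assms(4-6) by (simp add: Basis3 axd g_def integral_unique mult.assoc)
  ultimately show ?thesis by (simp add: One3)
qed

lemma poly4:
  fixes ca cb cc cd ce :: real
  assumes "\<And>y. f y = ca + cb*y + cc*y^2 + cd*y^3 + ce*y^4"
    and "v = ca + cb/2 + cc/3 + cd/4 + ce/5"
  shows "(f has_integral v) {0..1}"
proof -
  define F where "F y = ca*y + cb*y^2/2 + cc*y^3/3 + cd*y^4/4 + ce*y^5/5" for y :: real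
  have "((\<lambda>y. ca + cb*y + cc*y^2 + cd*y^3 + ce*y^4) has_integral (F 1 - F 0)) {0..1}"
    apply (rule fundamental_theorem_of_calculus)
     apply simp
    unfolding F_def has_real_derivative_iff_has_vector_derivative[symmetric]
    apply (rule derivative_eq_intros refl | simp)+
    done
  moreover have "F 1 - F 0 = v" using assms(2) by (simp add: F_def)
  moreover have "f = (\<lambda>y. ca + cb*y + cc*y^2 + cd*y^3 + ce*y^4)" using assms(1) by (rule ext)
  ultimately show ?thesis by simp
qed

definition hq :: "real \<Rightarrow> real \<Rightarrow> real \<Rightarrow> real" where "hq a b d = 60*(b-a) - 9*d"
definition hs :: "real \<Rightarrow> real \<Rightarrow> real \<Rightarrow> real" where "hs a b d = 10*d - 60*(b-a)"
definition hp :: "real \<Rightarrow> real \<Rightarrow> real \<Rightarrow> real" where "hp a b d = 2*a - hq a b d/3 - hs a b d/10"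
definition H :: "real \<Rightarrow> real \<Rightarrow> real \<Rightarrow> real \<Rightarrow> real" where
  "H a b d y = hp a b d + hq a b d * y + hs a b d * y^3"
definition H' :: "real \<Rightarrow> real \<Rightarrow> real \<Rightarrow> real \<Rightarrow> real" where
  "H' a b d y = hq a b d + 3 * hs a b d * y^2"

lemma H_deriv: "(H a b d has_real_derivative H' a b d y) (at y)"
  unfolding H_def H'_def
  by (rule derivative_eq_intros refl | simp)+

definition wv :: "real \<Rightarrow> real \<Rightarrow> real \<Rightarrow> real" where "wv a b t = (if t = 0 then a else b)"
definition phi :: "real \<Rightarrow> real \<Rightarrow> real \<Rightarrow> real \<Rightarrow> real \<Rightarrow> real" where
  "phi a b d t y = H a b d \<bar>y - t\<bar> * (1 - y)"

lemma cont_phi: "continuous_on {0..1} (phi a b d t)"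
  unfolding phi_def H_def by (intro continuous_intros)

lemma int_phi0: "(phi a b d 0 has_integral a) {0..1}"
proof -
  have "((\<lambda>y. H a b d y * (1-y)) has_integral a) {0..1}"
    by (rule poly4[where ca="hp a b d" and cb="hq a b d - hp a b d" and cc="- hq a b d" and cd="hs a b d" and ce="- hs a b d"])
       (simp add: H_def algebra_simps power2_eq_square power3_eq_cube power4_eq_xxxx, simp add: hp_def hq_def hs_def field_simps)
  then show ?thesis by (rule has_integral_eq[rotated]) (simp add: phi_def)
qed

lemma int_phi1: "(phi a b d 1 has_integral b) {0..1}"
proof -
  have "((\<lambda>y. H a b d (1-y) * (1-y)) has_integral b) {0..1}"
    by (rule poly4[where ca="hp a b d + hq a b d + hs a b d" and cb="- hp a b d - 2*hq a b d - 4*hs a b d"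
          and cc="hq a b d + 6*hs a b d" and cd="-4*hs a b d" and ce="hs a b d"])
       (simp add: H_def algebra_simps power2_eq_square power3_eq_cube power4_eq_xxxx, simp add: hp_def hq_def hs_def field_simps)
  then show ?thesis by (rule has_integral_eq[rotated]) (simp add: phi_def)
qed

lemma int_phi: "t = 0 \<or> t = 1 \<Longrightarrow> (phi a b d t has_integral wv a b t) {0..1}"
  using int_phi0 int_phi1 by (auto simp: wv_def)

lemma int_H': "((\<lambda>y. - H' a b d y) has_integral (-d)) {0..1}"
  apply (rule poly4[where ca="- hq a b d" and cb=0 and cc="-3*hs a b d" and cd=0 and ce=0])
   apply (simp add: H'_def)
  apply (simp add: hq_def hs_def)
  apply (simp add: field_simps)
  done


definition T :: "real \<Rightarrow> real \<Rightarrow> real \<Rightarrow> real^3 \<Rightarrow> real" where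
  "T a b d y = H a b d (y$1) * H a b d (y$2) * H a b d (y$3)"

fun PT :: "(real\<times>real\<times>real\<times>real) list \<Rightarrow> real^3 \<Rightarrow> real" where
  "PT [] y = 0"
| "PT ((c,a,b,d)#ps) y = c * T a b d y + PT ps y"

fun Ival :: "(real\<times>real\<times>real\<times>real) list \<Rightarrow> real^3 \<Rightarrow> real" where
  "Ival [] s = 0"
| "Ival ((c,a,b,d)#ps) s = c * (wv a b (s$1) * wv a b (s$2) * wv a b (s$3)) + Ival ps s"

fun Jval :: "(real\<times>real\<times>real\<times>real) list \<Rightarrow> real^3 \<Rightarrow> real" where
  "Jval [] s = 0"
| "Jval ((c,a,b,d)#ps) s = c * (- d * wv a b (s$2) * wv a b (s$3)) + Jval ps s"

definition corner01 :: "real^3 \<Rightarrow> bool" where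
  "corner01 s \<longleftrightarrow> (\<forall>i. s$i = 0 \<or> s$i = 1)"

lemma I_term:
  assumes "corner01 s"
  shows "((\<lambda>x. psi000 x * corner_shape (T a b d) s x) has_integral (wv a b (s$1) * wv a b (s$2) * wv a b (s$3))) unit_cube"
proof -
  have "((\<lambda>x::real^3. phi a b d (s$1) (x$1) * phi a b d (s$2) (x$2) * phi a b d (s$3) (x$3)) has_integral (wv a b (s$1) * wv a b (s$2) * wv a b (s$3))) (cbox 0 1)"
    by (rule prod3) (use assms in \<open>auto simp: cont_phi corner01_def intro!: int_phi\<close>)
  then show ?thesis unfolding unit_cube_def
    by (rule has_integral_eq[rotated]) (simp add: phi_def psi000_def corner_shape_def T_def mult_ac)
qed

lemma I_sum:
  assumes "corner01 s"
  shows "((\<lambda>x. psi000 x * corner_shape (PT ps) s x) has_integral Ival ps s) unit_cube"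
proof (induction ps)
  case Nil
  then show ?case by (simp add: corner_shape_def)
next
  case (Cons p ps)
  obtain c a b d where p: "p = (c,a,b,d)" by (cases p) auto
  have "((\<lambda>x. c * (psi000 x * corner_shape (T a b d) s x) + psi000 x * corner_shape (PT ps) s x) has_integral Ival (p#ps) s) unit_cube"
    unfolding p Ival.simps
    by (intro has_integral_add has_integral_mult_right I_term assms Cons.IH)
  then show ?case unfolding p
    by (rule has_integral_eq[rotated]) (simp add: corner_shape_def algebra_simps)
qed

lemma n3: "(1::3) \<noteq> 2" "(1::3) \<noteq> 3" "(2::3) \<noteq> 3" by simp_all
lemma prod_UNIV3: "prod f (UNIV::3 set) = f 1 * f 2 * f 3"
proof -
  have "prod f (UNIV::3 set) = prod f {1,2,3}" by (simp only: UNIV_3)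
  also have "\<dots> = f 1 * (f 2 * f 3)" using n3 by (simp del: insert_iff add: insert_iff)
  finally show ?thesis by (simp add: mult.assoc)
qed

lemma T_prod: "T a b d y = (\<Prod>i\<in>UNIV. H a b d (y$i))"
  by (simp add: T_def prod_UNIV3)

lemma T_sym: "p permutes (UNIV::3 set) \<Longrightarrow> T a b d (\<chi> i. x $ p i) = T a b d x"
  unfolding T_prod by (simp add: prod.permute[of p UNIV "\<lambda>i. H a b d (x$i)"] comp_def)

lemma PT_sym: "p permutes (UNIV::3 set) \<Longrightarrow> PT ps (\<chi> i. x $ p i) = PT ps x"
proof (induction ps)
  case (Cons p ps) then show ?case by (cases p) (simp add: T_sym)
qed simp

lemma PT_cont: "continuous_on S (PT ps)"
proof (induction ps)
  case (Cons p ps) then show ?case by (cases p) (auto simp: T_def H_def intro!: continuous_intros)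
qed simp


lemma ax1: "(x + t *\<^sub>R axis 1 1 :: real^3) $ 1 = x$1 + t"
           "(x + t *\<^sub>R axis 1 1 :: real^3) $ 2 = x$2"
           "(x + t *\<^sub>R axis 1 1 :: real^3) $ 3 = x$3"
  using n3 by (simp_all add: axis_def)

lemma pd1_psi: "pd1 psi000 x = -(1 - x$2) * (1 - x$3)"
proof -
  have e: "(\<lambda>t. psi000 (x + t *\<^sub>R axis 1 1)) = (\<lambda>t. (1 - (x$1 + t)) * ((1 - x$2) * (1 - x$3)))"
    unfolding psi000_def ax1 by (simp add: mult.assoc)
  have "((\<lambda>t. (1 - (x$1 + t)) * ((1 - x$2) * (1 - x$3))) has_real_derivative (-(1 - x$2) * (1 - x$3))) (at 0)"
    by (rule derivative_eq_intros refl | simp add: algebra_simps)+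
  then show ?thesis unfolding pd1_def e by (rule DERIV_imp_deriv)
qed

fun DPT :: "(real\<times>real\<times>real\<times>real) list \<Rightarrow> real^3 \<Rightarrow> real^3 \<Rightarrow> real" where
  "DPT [] s x = 0"
| "DPT ((c,a,b,d)#ps) s x = c * (H' a b d (x$1) * H a b d \<bar>x$2 - s$2\<bar> * H a b d \<bar>x$3 - s$3\<bar>) + DPT ps s x"

fun JF :: "(real\<times>real\<times>real\<times>real) list \<Rightarrow> real^3 \<Rightarrow> real^3 \<Rightarrow> real" where
  "JF [] s x = 0"
| "JF ((c,a,b,d)#ps) s x = c * ((- H' a b d (x$1)) * phi a b d (s$2) (x$2) * phi a b d (s$3) (x$3)) + JF ps s x"

lemma DPT_deriv:
  fixes x s :: "real^3"
  defines "z \<equiv> (\<lambda>t. (\<chi> i. if i = 1 then x$1 + t else \<bar>x$i - s$i\<bar>) :: real^3)"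
  shows "((\<lambda>t. PT ps (z t)) has_real_derivative DPT ps s x) (at 0)"
proof (induction ps)
  case Nil
  then show ?case by simp
next
  case (Cons p ps)
  obtain c a b d where p: "p = (c,a,b,d)" by (cases p) auto
  have zT: "T a b d (z t) = H a b d (x$1 + t) * (H a b d \<bar>x$2 - s$2\<bar> * H a b d \<bar>x$3 - s$3\<bar>)" for t
    using n3 by (simp add: z_def T_def mult.assoc)
  have "((\<lambda>t. H a b d (x$1 + t) * (H a b d \<bar>x$2 - s$2\<bar> * H a b d \<bar>x$3 - s$3\<bar>)) has_real_derivative
          H' a b d (x$1) * (H a b d \<bar>x$2 - s$2\<bar> * H a b d \<bar>x$3 - s$3\<bar>)) (at 0)"
  proof -
    have "((\<lambda>t. H a b d (x$1 + t)) has_real_derivative H' a b d (x$1)) (at 0)"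
      unfolding H_def H'_def by (rule derivative_eq_intros refl | simp)+
    then show ?thesis by (rule DERIV_cmult_right)
  qed
  then have "((\<lambda>t. c * T a b d (z t) + PT ps (z t)) has_real_derivative
      c * (H' a b d (x$1) * (H a b d \<bar>x$2 - s$2\<bar> * H a b d \<bar>x$3 - s$3\<bar>)) + DPT ps s x) (at 0)"
    unfolding zT by (intro DERIV_add DERIV_cmult Cons.IH)
  then show ?case unfolding p by (simp add: mult.assoc)
qed


lemma ax2: "axis (1::3) (1::real) $ 2 = 0" "axis (1::3) (1::real) $ 3 = 0"
  using n3 by (auto simp: axis_def)

lemma pd1_PT:
  fixes x s :: "real^3"
  assumes "0 < x$1" "s$1 = 0"
  shows "pd1 (corner_shape (PT ps) s) x = DPT ps s x"
proof -
  define z where "z \<equiv> (\<lambda>t. (\<chi> i. if i = 1 then x$1 + t else \<bar>x$i - s$i\<bar>) :: real^3)"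
  have D: "((\<lambda>t. PT ps (z t)) has_real_derivative DPT ps s x) (at 0)"
    unfolding z_def by (rule DPT_deriv)
  have eq: "PT ps (z t) = corner_shape (PT ps) s (x + t *\<^sub>R axis 1 1)" if "t \<in> ball 0 (x$1)" for t
  proof -
    have "\<bar>t\<bar> < x$1" using that by (simp add: dist_real_def)
    then have "z t = (\<chi> i. \<bar>(x + t *\<^sub>R axis 1 1)$i - s$i\<bar>)"
      unfolding z_def using assms(2) n3 by (simp add: vec_eq_iff forall_3 ax1 ax2)
    then show ?thesis by (simp add: corner_shape_def)
  qed
  have "((\<lambda>t. corner_shape (PT ps) s (x + t *\<^sub>R axis 1 1)) has_real_derivative DPT ps s x) (at 0)"
    by (rule has_field_derivative_transform_within_open[OF D, of "ball 0 (x$1)"]) (use assms eq in auto)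
  then show ?thesis unfolding pd1_def by (rule DERIV_imp_deriv)
qed

lemma JF_eq: "pd1 psi000 x * DPT ps s x = JF ps s x"
proof (induction ps)
  case (Cons p ps) then show ?case
    by (cases p) (simp add: pd1_psi phi_def algebra_simps)
qed simp

lemma cont_H': "continuous_on {0..1} (\<lambda>y. - H' a b d y)"
  unfolding H'_def by (intro continuous_intros)

lemma JF_int:
  assumes "corner01 s"
  shows "(JF ps s has_integral Jval ps s) (cbox 0 1)"
proof (induction ps)
  case Nil then show ?case by simp
next
  case (Cons p ps)
  obtain c a b d where p: "p = (c,a,b,d)" by (cases p) auto
  have t: "((\<lambda>x::real^3. (- H' a b d (x$1)) * phi a b d (s$2) (x$2) * phi a b d (s$3) (x$3)) has_integral
       (- d * wv a b (s$2) * wv a b (s$3))) (cbox 0 1)"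
    by (rule prod3) (use assms in \<open>auto simp: cont_phi cont_H' corner01_def intro!: int_phi int_H'\<close>)
  show ?case unfolding p JF.simps Jval.simps
    by (intro has_integral_add has_integral_mult_right t Cons.IH)
qed

lemma J_sum:
  assumes "corner01 s" "s$1 = 0"
  shows "J_int (PT ps) s (Jval ps s)"
proof -
  have "(JF ps s has_integral Jval ps s) (box 0 1)"
    using JF_int[OF assms(1)] by (simp add: has_integral_open_interval)
  then have "((\<lambda>x. pd1 psi000 x * pd1 (corner_shape (PT ps) s) x) has_integral Jval ps s) (box 0 1)"
  proof (rule has_integral_eq[rotated])
    fix x :: "real^3" assume "x \<in> box 0 1"
    then have "0 < x$1" by (simp add: mem_box_cart)
    then show "JF ps s x = pd1 psi000 x * pd1 (corner_shape (PT ps) s) x"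
      by (simp add: pd1_PT assms(2) JF_eq)
  qed
  then show ?thesis unfolding J_int_def unit_cube_def by (simp add: has_integral_open_interval)
qed


lemma C1_add: "C1_on U f \<Longrightarrow> C1_on U g \<Longrightarrow> C1_on U (\<lambda>x. f x + g x)"
  unfolding C1_on_def
proof (elim exE conjE)
  fix f' g' assume f: "\<forall>x\<in>U. (f has_derivative blinfun_apply (f' x)) (at x)" "continuous_on U f'"
    and g: "\<forall>x\<in>U. (g has_derivative blinfun_apply (g' x)) (at x)" "continuous_on U g'"
  show "\<exists>h'. (\<forall>x\<in>U. ((\<lambda>x. f x + g x) has_derivative blinfun_apply (h' x)) (at x)) \<and> continuous_on U h'"
    by (rule exI[of _ "\<lambda>x. f' x + g' x"])
       (use f g in \<open>auto simp: plus_blinfun.rep_eq intro!: has_derivative_add continuous_on_add\<close>)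
qed

lemma C1_mult: "C1_on U f \<Longrightarrow> C1_on U g \<Longrightarrow> C1_on U (\<lambda>x. f x * g x)"
  unfolding C1_on_def
proof (elim exE conjE)
  fix f' g' assume f: "\<forall>x\<in>U. (f has_derivative blinfun_apply (f' x)) (at x)" "continuous_on U f'"
    and g: "\<forall>x\<in>U. (g has_derivative blinfun_apply (g' x)) (at x)" "continuous_on U g'"
  have cf: "continuous_on U f"
    using f(1) by (intro continuous_at_imp_continuous_on) (auto intro: has_derivative_continuous)
  have cg: "continuous_on U g"
    using g(1) by (intro continuous_at_imp_continuous_on) (auto intro: has_derivative_continuous)
  show "\<exists>h'. (\<forall>x\<in>U. ((\<lambda>x. f x * g x) has_derivative blinfun_apply (h' x)) (at x)) \<and> continuous_on U h'"
  proof (rule exI[of _ "\<lambda>x. f x *\<^sub>R g' x + g x *\<^sub>R f' x"], intro conjI ballI)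
    fix x assume "x \<in> U"
    then have "((\<lambda>x. f x * g x) has_derivative (\<lambda>h. f x * blinfun_apply (g' x) h + blinfun_apply (f' x) h * g x)) (at x)"
      using f g by (intro has_derivative_mult) auto
    then show "((\<lambda>x. f x * g x) has_derivative blinfun_apply (f x *\<^sub>R g' x + g x *\<^sub>R f' x)) (at x)"
      by (simp add: plus_blinfun.rep_eq scaleR_blinfun.rep_eq mult.commute)
  next
    show "continuous_on U (\<lambda>x. f x *\<^sub>R g' x + g x *\<^sub>R f' x)"
      using f g cf cg by (intro continuous_intros) auto
  qed
qed

lemma C1_const: "C1_on U (\<lambda>x. c)"
  unfolding C1_on_def by (rule exI[of _ "\<lambda>x. 0"]) (auto simp: zero_blinfun.rep_eq)

lemma C1_coord: "C1_on U (\<lambda>y::real^3. H a b d (y$i))"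
  unfolding C1_on_def
proof (rule exI[of _ "\<lambda>y. H' a b d (y$i) *\<^sub>R Blinfun (\<lambda>h::real^3. h$i)"], intro conjI ballI)
  fix y :: "real^3"
  have "((\<lambda>y::real^3. H a b d (y$i)) has_derivative (\<lambda>h. H' a b d (y$i) * h$i)) (at y)"
  proof -
    have l: "((\<lambda>y::real^3. y$i) has_derivative (\<lambda>h. h$i)) (at y)"
      by (rule bounded_linear_imp_has_derivative[OF bounded_linear_vec_nth])
    show ?thesis
      using has_derivative_compose[OF l H_deriv[of a b d "y$i", unfolded has_field_derivative_def]] by simp
  qed
  then show "((\<lambda>y::real^3. H a b d (y$i)) has_derivative blinfun_apply (H' a b d (y$i) *\<^sub>R Blinfun (\<lambda>h::real^3. h$i))) (at y)"
    by (simp add: scaleR_blinfun.rep_eq bounded_linear_Blinfun_apply[OF bounded_linear_vec_nth])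
next
  show "continuous_on U (\<lambda>y::real^3. H' a b d (y$i) *\<^sub>R Blinfun (\<lambda>h::real^3. h$i))"
    unfolding H'_def by (intro continuous_intros)
qed

lemma C1_PT: "C1_on U (PT ps)"
proof (induction ps)
  case Nil
  have "PT [] = (\<lambda>x. 0)" by (rule ext) simp
  then show ?case using C1_const[of U 0] by simp
next
  case (Cons p ps)
  obtain c a b d where p: "p = (c,a,b,d)" by (cases p) auto
  have "C1_on U (\<lambda>y. c * T a b d y + PT ps y)"
    unfolding T_def
    by (intro C1_add C1_mult C1_const C1_coord Cons.IH)
  moreover have "PT (p#ps) = (\<lambda>y. c * T a b d y + PT ps y)" unfolding p by (rule ext) simp
  ultimately show ?case by simp
qed


theorem mainTheorem2:
  fixes I0 I1 I2 I3 J0 J1 J2 :: real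
  shows "\<exists>pt :: real^3 \<Rightarrow> real.
           continuous_on unit_cube pt \<and> piecewise_C1_cube pt \<and> axis_symmetric pt \<and>
           I_int pt (vector [0,0,0]) I0 \<and> I_int pt (vector [1,0,0]) I1 \<and>
           I_int pt (vector [1,1,0]) I2 \<and> I_int pt (vector [1,1,1]) I3 \<and>
           J_int pt (vector [0,0,0]) J0 \<and> J_int pt (vector [0,1,0]) J1 \<and>
           J_int pt (vector [0,1,1]) J2"
proof -
  define c7 where "c7 = J1"
  define c5 where "c5 = J0 - J1"
  define c6 where "c6 = J2 - J1"
  define c3 where "c3 = (I1 + I2)/2 - J1"
  define c4 where "c4 = (I2 - I1)/2"
  define c1 where "c1 = I0 - c3 - c4 - c5 - c7"
  define c2 where "c2 = I3 - c3 + c4 - c6 - c7"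
  define ps :: "(real\<times>real\<times>real\<times>real) list" where
    "ps = [(c1,1,0,0),(c2,0,1,0),(c3,1,1,0),(c4,1,-1,0),(c5,1,0,-1),(c6,0,1,-1),(c7,1,1,-1)]"
  have cor: "corner01 (vector [x,y,z]) \<longleftrightarrow> (x = 0 \<or> x = 1) \<and> (y = 0 \<or> y = 1) \<and> (z = 0 \<or> z = 1)" for x y z :: real
    by (simp add: corner01_def forall_3)
  have II: "I_int (PT ps) s (Ival ps s)" if "corner01 s" for s
    unfolding I_int_def by (rule I_sum[OF that])
  have JJ: "J_int (PT ps) s (Jval ps s)" if "corner01 s" "s$1 = 0" for s
    by (rule J_sum[OF that])
  have v: "Ival ps (vector [0,0,0]) = I0" "Ival ps (vector [1,0,0]) = I1"
       "Ival ps (vector [1,1,0]) = I2" "Ival ps (vector [1,1,1]) = I3"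
       "Jval ps (vector [0,0,0]) = J0" "Jval ps (vector [0,1,0]) = J1" "Jval ps (vector [0,1,1]) = J2"
    by (simp_all add: ps_def wv_def c1_def c2_def c3_def c4_def c5_def c6_def c7_def field_simps)
  have pw: "piecewise_C1_cube (PT ps)"
    unfolding piecewise_C1_cube_def
    by (rule exI[of _ "{unit_cube}"]) (auto simp: unit_cube_def polytope_interval intro!: exI[of _ UNIV] exI[of _ "PT ps"] C1_PT)
  have sym: "axis_symmetric (PT ps)"
    unfolding axis_symmetric_def using PT_sym by blast
  show ?thesis
    apply (rule exI[of _ "PT ps"])
    using II[of "vector [0,0,0]"] II[of "vector [1,0,0]"] II[of "vector [1,1,0]"] II[of "vector [1,1,1]"]
      JJ[of "vector [0,0,0]"] JJ[of "vector [0,1,0]"] JJ[of "vector [0,1,1]"]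
    by (simp add: cor v pw sym PT_cont)
qed

end
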